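(* Let $\mathbb{F}_q$ be any finite field and let $S\subseteq \mathbb{F}_q\setminus\{0\}$ be any symmetric set (i.e. $S=-S$). Then \[\Theta_{\mathrm{lin}}\big(\Gamma(\mathbb{F}_q,S)\big)\le q^{\,1-\frac{|S|}{q-1}}.\] Equivalently, for every $n\ge 1$, every linear subspace of $\mathbb{F}_q^n$ that is an independent set in $\Gamma(\mathbb{F}_q,S)^n$ has dimension $m$ satisfying $\frac{m}{n}\le 1-\frac{|S|}{q-1}$.
   Context: For graphs $G_1,\dots,G_k$, the strong product $G_1\boxtimes\cdots\boxtimes G_k$ has vertex set $V(G_1)\times\cdots\times V(G_k)$, and two distinct vertices $(v_1,\dots,v_k)$ and $(u_1,\dots,u_k)$ are adjacent iff for every $i$, either $v_i=u_i$ or $\{v_i,u_i\}\in E(G_i)$. Write $G^k$ for the strong product of $k$ copies of $G$. For a symmetric set $S\subseteq\mathbb{F}_q\setminus\{0\}$ (with $S=-S$; $S$ need not generate $\mathbb{F}_q$), the Cayley graph $\Gamma(\mathbb{F}_q,S)$ has vertex set $\mathbb{F}_q$, and $u,v$ are adjacent iff $u-v\in S$. For a graph $G$ with $V(G)=\mathbb{F}_q$ and $k\ge1$, the linear independence number $\alpha_{\mathrm{lin}}(G^k)$ is the largest size of an independent set of $G^k$ that is a linear subspace of $\mathbb{F}_q^k$ (equivalently, one of the form $\{(x,Ax):x\in\mathbb{F}_q^m\}$ for some $1\le m\le k$ and some $A\in\mathbb{F}_q^{(k-m)\times m}$, up to the order of coordinates). The linear Shannon capacity is $\Theta_{\mathrm{lin}}(G)=\sup_k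 \alpha_{\mathrm{lin}}(G^k)^{1/k}=\lim_{k\to\infty}\alpha_{\mathrm{lin}}(G^k)^{1/k}$. *)

theory Defs
  imports Complex_Main "HOL-Library.Cardinality"
begin

text \<open>Vectors of \<open>F^k\<close> are represented as functions \<open>nat \<Rightarrow> 'a\<close> vanishing outside \<open>{..<k}\<close>.\<close>
definition vecs :: "nat \<Rightarrow> (nat \<Rightarrow> 'a::field) set" where
  "vecs k = {x. \<forall>i\<ge>k. x i = 0}"

definition lin_subspace :: "nat \<Rightarrow> (nat \<Rightarrow> 'a::field) set \<Rightarrow> bool" where
  "lin_subspace k V \<longleftrightarrow> V \<subseteq> vecs k \<and> (\<lambda>i. 0) \<in> V \<and>
     (\<forall>x\<in>V. \<forall>y\<in>V. (\<lambda>i. x i + y i) \<in> V) \<and>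
     (\<forall>c. \<forall>x\<in>V. (\<lambda>i. c * x i) \<in> V)"

definition cayley_adj :: "'a::field set \<Rightarrow> 'a \<Rightarrow> 'a \<Rightarrow> bool" where
  "cayley_adj S u v \<longleftrightarrow> u - v \<in> S"

definition strong_pow_adj :: "('a \<Rightarrow> 'a \<Rightarrow> bool) \<Rightarrow> nat \<Rightarrow> (nat \<Rightarrow> 'a) \<Rightarrow> (nat \<Rightarrow> 'a) \<Rightarrow> bool" where
  "strong_pow_adj E k x y \<longleftrightarrow> x \<noteq> y \<and> (\<forall>i<k. x i = y i \<or> E (x i) (y i))"

definition indep_set :: "('b \<Rightarrow> 'b \<Rightarrow> bool) \<Rightarrow> 'b set \<Rightarrow> bool" where
  "indep_set A I \<longleftrightarrow> (\<forall>x\<in>I. \<forall>y\<in>I. \<not> A x y)"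

definition alpha_lin :: "('a::{finite,field} \<Rightarrow> 'a \<Rightarrow> bool) \<Rightarrow> nat \<Rightarrow> nat" where
  "alpha_lin E k = Max {card V | V. lin_subspace k V \<and> indep_set (strong_pow_adj E k) V}"

definition theta_lin :: "('a::{finite,field} \<Rightarrow> 'a \<Rightarrow> bool) \<Rightarrow> real" where
  "theta_lin E = (SUP k\<in>{1..}. real (alpha_lin E k) powr (1 / real k))"

end

theory Submission imports Defs "HOL-Computational_Algebra.Polynomial" begin

lemma char_card: "(of_nat CARD('a) :: 'a::{finite,field}) = 0"
proof -
  have "(\<Sum>t\<in>UNIV. t + 1) = (\<Sum>t\<in>UNIV. (t::'a))"
    by (rule sum.reindex_bij_witness[of _ "\<lambda>t. t - 1" "\<lambda>t. t + 1"]) auto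
  then show ?thesis by (simp add: sum.distrib)
qed

lemma powsum_zero:
  assumes "j < CARD('a) - 1"
  shows "(\<Sum>t\<in>UNIV. t ^ j) = (0::'a::{finite,field})"
proof (cases "j = 0")
  case True then show ?thesis using char_card by simp
next
  case False
  define p :: "'a poly" where "p = monom 1 j + [:-1:]"
  have dp: "degree p = j" unfolding p_def using False
    by (subst degree_add_eq_left) (auto simp: degree_monom_eq)
  hence "p \<noteq> 0" using False by auto
  hence "card {x. poly p x = 0} \<le> j" using card_poly_roots_bound dp by metis
  also have "... < card (UNIV - {0::'a})" using assms by (simp add: card_Diff_singleton)
  finally have "\<not> (UNIV - {0}) \<subseteq> {x. poly p x = 0}"
    by (metis card_mono finite_class.finite_UNIV finite_subset not_le subset_UNIV finite_Collect_subsets)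
  then obtain a where a0: "a \<noteq> 0" and ap: "poly p a \<noteq> 0" by auto
  hence aj: "a ^ j \<noteq> 1" by (simp add: p_def poly_monom)
  have "(\<Sum>t\<in>UNIV. t ^ j) = (\<Sum>t\<in>UNIV. (a * t) ^ j)"
    by (rule sum.reindex_bij_witness[of _ "\<lambda>t. a * t" "\<lambda>t. t / a"]) (use a0 in auto)
  also have "... = a ^ j * (\<Sum>t\<in>UNIV. t ^ j)" by (simp add: power_mult_distrib sum_distrib_left)
  finally have "(a ^ j - 1) * (\<Sum>t\<in>UNIV. t ^ j) = 0" by (simp add: algebra_simps)
  thus ?thesis using aj by simp
qed

lemma finite_vecs: "finite (vecs n :: (nat \<Rightarrow> 'a::{finite,field}) set)"
proof -
  have "vecs n = {f::nat\<Rightarrow>'a. \<forall>x. (x \<in> {..<n} \<longrightarrow> f x \<in> UNIV) \<and> (x \<notin> {..<n} \<longrightarrow> f x = 0)}"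
    by (auto simp: vecs_def)
  thus ?thesis using finite_set_of_finite_funs[of "{..<n}" "UNIV::'a set" 0] by simp
qed

lemma card_ge2: "2 \<le> CARD('a::{finite,field})"
proof -
  have "card {0,1::'a} \<le> CARD('a)" by (rule card_mono) auto
  thus ?thesis by simp
qed

lemma vanish:
  fixes V :: "(nat \<Rightarrow> 'a::{finite,field}) set" and K :: "'k set"
  assumes "lin_subspace n V" "finite K" "CARD('a) ^ card K < card V ^ (CARD('a) - 1)"
  shows "(\<Sum>y\<in>V. \<Prod>k\<in>K. y (c k) + b k) = 0"
  using assms
proof (induction "card V" arbitrary: V K b rule: less_induct)
  case less
  let ?q = "CARD('a)"
  have q2: "2 \<le> ?q" by (rule card_ge2)
  have sub: "V \<subseteq> vecs n" and z: "(\<lambda>i. 0) \<in> V"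
    and add: "\<And>x y. x \<in> V \<Longrightarrow> y \<in> V \<Longrightarrow> (\<lambda>i. x i + y i) \<in> V"
    and smul: "\<And>a x. x \<in> V \<Longrightarrow> (\<lambda>i. a * x i) \<in> V"
    using less.prems(1) unfolding lin_subspace_def by blast+
  have finV: "finite V" using sub finite_vecs finite_subset by blast
  have "V \<noteq> {\<lambda>i. 0}"
  proof
    assume "V = {\<lambda>i. 0}"
    hence "card V = 1" by simp
    with less.prems(3) show False by simp
  qed
  then obtain v where vV: "v \<in> V" and vne: "v \<noteq> (\<lambda>i. 0)" using z by blast
  then obtain i where vi: "v i \<noteq> 0" by auto
  define e where "e = (\<lambda>l. (1 / v i) * v l)"
  have eV: "e \<in> V" unfolding e_def using smul vV by blast
  have ei: "e i = 1" using vi by (simp add: e_def)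
  define W where "W = {w\<in>V. w i = 0}"
  define \<psi> where "\<psi> = (\<lambda>(w::nat\<Rightarrow>'a, t::'a). (\<lambda>l. w l + t * e l))"
  have linW: "lin_subspace n W" using less.prems(1) unfolding lin_subspace_def W_def by auto
  have inj: "inj_on \<psi> (W \<times> UNIV)"
  proof (rule inj_onI)
    fix p p' assume pW: "p \<in> W \<times> UNIV" "p' \<in> W \<times> UNIV" and eq0: "\<psi> p = \<psi> p'"
    obtain w t where pe: "p = (w, t)" by (cases p)
    obtain w' t' where pe': "p' = (w', t')" by (cases p')
    have eq: "\<psi> (w, t) = \<psi> (w', t')" using eq0 pe pe' by simp
    have wi: "w i = 0" "w' i = 0" using pW pe pe' by (auto simp: W_def)
    from eq have "\<And>l. w l + t * e l = w' l + t' * e l" by (simp add: \<psi>_def fun_eq_iff)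
    from this[of i] have tt: "t = t'" using wi ei by simp
    with eq have "w = w'" by (simp add: \<psi>_def fun_eq_iff)
    with tt show "p = p'" using pe pe' by simp
  qed
  have img: "\<psi> ` (W \<times> UNIV) = V"
  proof
    show "\<psi> ` (W \<times> UNIV) \<subseteq> V"
      using add smul eV by (auto simp: \<psi>_def W_def)
  next
    show "V \<subseteq> \<psi> ` (W \<times> UNIV)"
    proof
      fix y assume yV: "y \<in> V"
      define w where "w = (\<lambda>l. y l + (- y i) * e l)"
      have "w \<in> V" unfolding w_def using add smul eV yV by blast
      moreover have "w i = 0" using ei by (simp add: w_def)
      ultimately have "w \<in> W" by (simp add: W_def)
      moreover have "y = \<psi> (w, y i)" by (simp add: \<psi>_def w_def)
      ultimately show "y \<in> \<psi> ` (W \<times> UNIV)" by blast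
    qed
  qed
  have cardV: "card V = card W * ?q"
    using card_image[OF inj] img by (simp add: card_cartesian_product)
  have finW: "finite W" using finV by (simp add: W_def)
  have "(\<lambda>i. 0) \<in> W" using z by (simp add: W_def)
  hence "card W \<noteq> 0" using finW by auto
  hence Wlt: "card W < card V" using cardV q2 by simp
  define E where "E = (\<lambda>X. \<Prod>k\<in>X. e (c k))"
  define G where "G = (\<lambda>X w. \<Prod>k\<in>K - X. w (c k) + b k)"
  have "(\<Sum>y\<in>V. \<Prod>k\<in>K. y (c k) + b k) = (\<Sum>p\<in>W \<times> UNIV. \<Prod>k\<in>K. \<psi> p (c k) + b k)"
    using sum.reindex[OF inj, of "\<lambda>y. \<Prod>k\<in>K. y (c k) + b k"] img by simp
  also have "... = (\<Sum>(w,t)\<in>W \<times> UNIV. \<Prod>k\<in>K. t * e (c k) + (w (c k) + b k))"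
    by (rule sum.cong) (auto simp: \<psi>_def algebra_simps)
  also have "... = (\<Sum>w\<in>W. \<Sum>t\<in>UNIV. \<Prod>k\<in>K. t * e (c k) + (w (c k) + b k))"
    by (rule sum.cartesian_product[symmetric])
  also have "... = (\<Sum>w\<in>W. \<Sum>t\<in>UNIV. \<Sum>X\<in>Pow K. t ^ card X * (E X * G X w))"
    by (simp add: prod_add[OF less.prems(2)] E_def G_def prod.distrib mult.assoc)
  also have "... = (\<Sum>w\<in>W. \<Sum>X\<in>Pow K. \<Sum>t\<in>UNIV. t ^ card X * (E X * G X w))"
    by (rule sum.cong[OF refl], rule sum.swap)
  also have "... = (\<Sum>X\<in>Pow K. \<Sum>w\<in>W. \<Sum>t\<in>UNIV. t ^ card X * (E X * G X w))"
    by (rule sum.swap)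
  also have "... = (\<Sum>X\<in>Pow K. (\<Sum>t\<in>UNIV. t ^ card X) * (E X * (\<Sum>w\<in>W. G X w)))"
    by (simp only: sum_distrib_right[symmetric] sum_distrib_left[symmetric])
  also have "... = 0"
  proof (rule sum.neutral, rule ballI)
    fix X assume X: "X \<in> Pow K"
    show "(\<Sum>t\<in>UNIV. t ^ card X) * (E X * (\<Sum>w\<in>W. G X w)) = 0"
    proof (cases "card X < ?q - 1")
      case True
      then have "(\<Sum>t\<in>UNIV. t ^ card X) = (0::'a)" by (rule powsum_zero)
      then show ?thesis by simp
    next
      case False
      have XK: "X \<subseteq> K" using X by simp
      have cX: "card X \<le> card K" using card_mono[OF less.prems(2) XK] .
      have cKX: "card (K - X) = card K - card X"
        using card_Diff_subset[OF finite_subset[OF XK less.prems(2)] XK] .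
      have "?q ^ card (K - X) * ?q ^ (?q - 1) = ?q ^ (card (K - X) + (?q - 1))"
        by (rule power_add[symmetric])
      also have "... \<le> ?q ^ card K" using False cKX cX q2
        by (intro power_increasing) auto
      also have "... < card V ^ (?q - 1)" by (rule less.prems(3))
      also have "... = card W ^ (?q - 1) * ?q ^ (?q - 1)" by (simp add: cardV power_mult_distrib)
      finally have "?q ^ card (K - X) < card W ^ (?q - 1)" by simp
      hence "(\<Sum>w\<in>W. G X w) = 0"
        unfolding G_def using less.hyps[OF Wlt linW] less.prems(2) by simp
      then show ?thesis by simp
    qed
  qed
  finally show ?case .
qed


lemma bound_nat:
  fixes S :: "'a::{finite,field} set" and V :: "(nat \<Rightarrow> 'a) set"
  assumes S0: "0 \<notin> S" and lin: "lin_subspace n V"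
    and ind: "indep_set (strong_pow_adj (cayley_adj S) n) V"
  shows "card V ^ (CARD('a) - 1) \<le> CARD('a) ^ (n * card (- insert 0 S))"
proof (rule ccontr)
  define R where "R = - insert (0::'a) S"
  define K where "K = {..<n} \<times> R"
  assume "\<not> ?thesis"
  hence lt: "CARD('a) ^ card K < card V ^ (CARD('a) - 1)"
    by (simp add: K_def R_def card_cartesian_product)
  have fK: "finite K" by (simp add: K_def)
  define f where "f = (\<lambda>y::nat\<Rightarrow>'a. \<Prod>k\<in>K. y (fst k) + (- snd k))"
  have s0: "(\<Sum>y\<in>V. f y) = 0" unfolding f_def by (rule vanish[OF lin fK lt])
  have z: "(\<lambda>i. 0) \<in> V" and sub: "V \<subseteq> vecs n" using lin unfolding lin_subspace_def by blast+
  have finV: "finite V" using sub finite_vecs finite_subset by blast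
  have fz: "\<And>y. y \<in> V - {\<lambda>i. 0} \<Longrightarrow> f y = 0"
  proof -
    fix y assume y: "y \<in> V - {\<lambda>i. 0}"
    hence "\<not> strong_pow_adj (cayley_adj S) n y (\<lambda>i. 0)" using ind z unfolding indep_set_def by blast
    then obtain i where i: "i < n" "y i \<noteq> 0" "y i \<notin> S" using y
      by (auto simp: strong_pow_adj_def cayley_adj_def)
    hence "(i, y i) \<in> K" by (simp add: K_def R_def)
    moreover have "y (fst (i, y i)) + - snd (i, y i) = 0" by simp
    ultimately show "f y = 0" unfolding f_def using fK by (metis (no_types, lifting) prod_zero_iff)
  qed
  have "(\<Sum>y\<in>V. f y) = f (\<lambda>i. 0) + (\<Sum>y\<in>V - {\<lambda>i. 0}. f y)"
    using sum.remove[OF finV z] by simp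
  also have "(\<Sum>y\<in>V - {\<lambda>i. 0}. f y) = 0" using fz by simp
  finally have "f (\<lambda>i. 0) = 0" using s0 by simp
  moreover have "f (\<lambda>i. 0) \<noteq> 0" unfolding f_def using fK by (auto simp: K_def R_def)
  ultimately show False by simp
qed


lemma bound_real:
  fixes S :: "'a::{finite,field} set" and V :: "(nat \<Rightarrow> 'a) set"
  assumes S0: "0 \<notin> S" and lin: "lin_subspace n V"
    and ind: "indep_set (strong_pow_adj (cayley_adj S) n) V" and n: "n \<ge> 1"
  shows "real (card V) powr (1 / real n) \<le> real CARD('a) powr (1 - real (card S) / (real CARD('a) - 1))"
proof -
  let ?q = "CARD('a)"
  define cR where "cR = card (- insert (0::'a) S)"
  have q2: "2 \<le> ?q" by (rule card_ge2)
  have "card (insert 0 S) = card S + 1" using S0 by simp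
  moreover have "card (insert (0::'a) S) \<le> ?q" by (rule card_mono) auto
  moreover have "cR = ?q - card (insert 0 S)" unfolding cR_def by (simp add: Compl_eq_Diff_UNIV card_Diff_subset)
  ultimately have cRr: "real cR = real ?q - 1 - real (card S)" by simp
  have z: "(\<lambda>i. 0) \<in> V" and sub: "V \<subseteq> vecs n" using lin unfolding lin_subspace_def by blast+
  have finV: "finite V" using sub finite_vecs finite_subset by blast
  have xpos: "real (card V) > 0" using z finV by (auto simp: card_gt_0_iff)
  have "card V ^ (?q - 1) \<le> ?q ^ (n * cR)" unfolding cR_def by (rule bound_nat[OF S0 lin ind])
  hence "real (card V) ^ (?q - 1) \<le> real ?q ^ (n * cR)" by (metis of_nat_le_iff of_nat_power)
  hence h1: "real (card V) powr (real (?q - 1)) \<le> real ?q powr (real (n * cR))"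
    using xpos q2 by (simp only: powr_realpow of_nat_0_less_iff)
  have "(real (card V) powr (real (?q - 1))) powr (1 / real (?q - 1))
        \<le> (real ?q powr (real (n * cR))) powr (1 / real (?q - 1))"
    by (rule powr_mono2[OF _ _ h1]) auto
  hence h2: "real (card V) \<le> real ?q powr (real (n * cR) / real (?q - 1))"
    using q2 xpos by (simp add: powr_powr)
  have "real (card V) powr (1 / real n) \<le> (real ?q powr (real (n * cR) / real (?q - 1))) powr (1 / real n)"
    by (rule powr_mono2[OF _ _ h2]) (use xpos in auto)
  also have "... = real ?q powr (real cR / real (?q - 1))"
    using n by (simp add: powr_powr)
  also have "real cR / real (?q - 1) = 1 - real (card S) / (real ?q - 1)"
    using cRr q2 by (simp add: of_nat_diff field_simps)
  finally show ?thesis .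
qed

theorem theorem1:
  fixes S :: "'a::{finite,field} set"
  assumes "0 \<notin> S"
    and "\<forall>s\<in>S. - s \<in> S"
  shows "theta_lin (cayley_adj S)
           \<le> real CARD('a) powr (1 - real (card S) / (real CARD('a) - 1))"
  unfolding theta_lin_def
proof (rule cSUP_least)
  show "{1::nat..} \<noteq> {}" by auto
next
  fix k :: nat assume k: "k \<in> {1..}"
  define A where "A = {card V | V::(nat\<Rightarrow>'a) set. lin_subspace k V \<and> indep_set (strong_pow_adj (cayley_adj S) k) V}"
  have "lin_subspace k {\<lambda>i::nat. 0::'a}" by (auto simp: lin_subspace_def vecs_def)
  moreover have "indep_set (strong_pow_adj (cayley_adj S) k) {\<lambda>i::nat. 0::'a}"
    by (auto simp: indep_set_def strong_pow_adj_def)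
  ultimately have "card {\<lambda>i::nat. 0::'a} \<in> A" unfolding A_def by blast
  hence ne: "A \<noteq> {}" by blast
  have "A \<subseteq> card ` Pow (vecs k :: (nat \<Rightarrow> 'a) set)" unfolding A_def lin_subspace_def by auto
  hence fin: "finite A" using finite_vecs by (meson finite_Pow_iff finite_imageI finite_subset)
  have "Max A \<in> A" using Max_in[OF fin ne] .
  then obtain V where V: "Max A = card V" "lin_subspace k V" "indep_set (strong_pow_adj (cayley_adj S) k) V"
    unfolding A_def by blast
  have "alpha_lin (cayley_adj S) k = card V" unfolding alpha_lin_def using V(1) by (simp add: A_def)
  thus "real (alpha_lin (cayley_adj S) k) powr (1 / real k)
           \<le> real CARD('a) powr (1 - real (card S) / (real CARD('a) - 1))"
    using bound_real[OF assms(1) V(2) V(3)] k by simp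
qed

end
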